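(* For all $n\ge 2$, $|F_n(321,1243)|=n^2-3n+4$.
   Context: A permutation $\pi$ avoids a classical pattern $p\in S_k$ if no subsequence of $\pi$ of length $k$ is order-isomorphic to $p$. A Fishburn permutation is a permutation $\pi=\pi_1\cdots\pi_n$ of $[n]$ for which there are no indices $i<j$ with $\pi_j<\pi_i<\pi_{i+1}$ and $\pi_i=\pi_j+1$. $F_n(\sigma_1,\dots,\sigma_k)$ denotes the set of Fishburn permutations of length $n$ avoiding each of the classical patterns $\sigma_1,\dots,\sigma_k$. *)

theory Defs
  imports Main
begin

definition perm_of :: "nat \<Rightarrow> nat list \<Rightarrow> bool" where
  "perm_of n \<pi> \<longleftrightarrow> distinct \<pi> \<and> set \<pi> = {1..n}"

definition contains :: "nat list \<Rightarrow> nat list \<Rightarrow> bool" where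
  "contains \<pi> p \<longleftrightarrow> (\<exists>idx :: nat \<Rightarrow> nat.
      (\<forall>a b. a < b \<and> b < length p \<longrightarrow> idx a < idx b) \<and>
      (\<forall>a < length p. idx a < length \<pi>) \<and>
      (\<forall>a < length p. \<forall>b < length p. (\<pi> ! idx a < \<pi> ! idx b \<longleftrightarrow> p ! a < p ! b)))"

definition avoids :: "nat list \<Rightarrow> nat list \<Rightarrow> bool" where
  "avoids \<pi> p \<longleftrightarrow> \<not> contains \<pi> p"

definition fishburn :: "nat list \<Rightarrow> bool" where
  "fishburn \<pi> \<longleftrightarrow> \<not> (\<exists>i j. i < j \<and> j < length \<pi> \<and> i + 1 < length \<pi> \<and>
      \<pi> ! j < \<pi> ! i \<and> \<pi> ! i < \<pi> ! (i + 1) \<and> \<pi> ! i = \<pi> ! j + 1)"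

definition F :: "nat \<Rightarrow> nat list list \<Rightarrow> nat list set" where
  "F n \<sigma>s = {\<pi>. perm_of n \<pi> \<and> fishburn \<pi> \<and> (\<forall>\<sigma>\<in>set \<sigma>s. avoids \<pi> \<sigma>)}"

end

theory Submission
  imports Defs
begin


definition no321 :: "nat list \<Rightarrow> bool" where
  "no321 p \<longleftrightarrow> \<not>(\<exists>i j k. i<j \<and> j<k \<and> k<length p \<and> p!j < p!i \<and> p!k < p!j)"
definition no1243 :: "nat list \<Rightarrow> bool" where
  "no1243 p \<longleftrightarrow> \<not>(\<exists>i j k l. i<j \<and> j<k \<and> k<l \<and> l<length p \<and> p!i < p!j \<and> p!j < p!l \<and> p!l < p!k)"

lemma lt3: "(a::nat) < 3 \<longleftrightarrow> a = 0 \<or> a = 1 \<or> a = 2" by auto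
lemma lt4: "(a::nat) < 4 \<longleftrightarrow> a = 0 \<or> a = 1 \<or> a = 2 \<or> a = 3" by auto

lemma contains321: "contains p [3,2,1] \<longleftrightarrow> \<not> no321 p"
proof
  assume "contains p [3,2,1]"
  then obtain idx where h: "\<forall>a b. a < b \<and> b < 3 \<longrightarrow> idx a < idx b"
    "\<forall>a < 3. idx a < length p"
    "\<forall>a < 3. \<forall>b < 3. (p ! idx a < p ! idx b \<longleftrightarrow> [3,2,1::nat] ! a < [3,2,1] ! b)"
    unfolding contains_def by (simp add: eval_nat_numeral) blast
  have "idx 0 < idx 1" "idx 1 < idx 2" "idx 2 < length p" using h(1,2) by auto
  moreover have "p ! idx 1 < p ! idx 0" "p ! idx 2 < p ! idx 1"
    using h(3)[rule_format, of 1 0] h(3)[rule_format, of 2 1] by auto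
  ultimately show "\<not> no321 p" unfolding no321_def by blast
next
  assume "\<not> no321 p"
  then obtain i j k where h: "i<j" "j<k" "k<length p" "p!j < p!i" "p!k < p!j"
    unfolding no321_def by blast
  define idx where "idx = (\<lambda>a::nat. if a = 0 then i else if a = 1 then j else k)"
  have "\<forall>a b. a < b \<and> b < 3 \<longrightarrow> idx a < idx b" using h unfolding idx_def lt3 by auto
  moreover have "\<forall>a < 3. idx a < length p" using h unfolding idx_def lt3 by auto
  moreover have "\<forall>a < 3. \<forall>b < 3. (p ! idx a < p ! idx b \<longleftrightarrow> [3,2,1::nat] ! a < [3,2,1] ! b)"
    using h unfolding idx_def lt3 by auto
  ultimately show "contains p [3,2,1]" unfolding contains_def by (intro exI[of _ idx]) simp
qed

lemma contains1243: "contains p [1,2,4,3] \<longleftrightarrow> \<not> no1243 p"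
proof
  assume "contains p [1,2,4,3]"
  then obtain idx where h: "\<forall>a b. a < b \<and> b < 4 \<longrightarrow> idx a < idx b"
    "\<forall>a < 4. idx a < length p"
    "\<forall>a < 4. \<forall>b < 4. (p ! idx a < p ! idx b \<longleftrightarrow> [1,2,4,3::nat] ! a < [1,2,4,3] ! b)"
    unfolding contains_def by (simp add: eval_nat_numeral) blast
  have "idx 0 < idx 1" "idx 1 < idx 2" "idx 2 < idx 3" "idx 3 < length p" using h(1,2) by auto
  moreover have "p ! idx 0 < p ! idx 1" "p ! idx 1 < p ! idx 3" "p ! idx 3 < p ! idx 2"
    using h(3)[rule_format, of 0 1] h(3)[rule_format, of 1 3] h(3)[rule_format, of 3 2] by auto
  ultimately show "\<not> no1243 p" unfolding no1243_def by blast
next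
  assume "\<not> no1243 p"
  then obtain i j k l where h: "i<j" "j<k" "k<l" "l<length p" "p!i < p!j" "p!j < p!l" "p!l < p!k"
    unfolding no1243_def by blast
  define idx where "idx = (\<lambda>a::nat. if a = 0 then i else if a = 1 then j else if a = 2 then k else l)"
  have "\<forall>a b. a < b \<and> b < 4 \<longrightarrow> idx a < idx b" using h unfolding idx_def lt4 by auto
  moreover have "\<forall>a < 4. idx a < length p" using h unfolding idx_def lt4 by auto
  moreover have "\<forall>a < 4. \<forall>b < 4. (p ! idx a < p ! idx b \<longleftrightarrow> [1,2,4,3::nat] ! a < [1,2,4,3] ! b)"
    using h unfolding idx_def lt4 by auto
  ultimately show "contains p [1,2,4,3]" unfolding contains_def by (intro exI[of _ idx]) simp
qed

definition good :: "nat list \<Rightarrow> bool" where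
  "good p \<longleftrightarrow> fishburn p \<and> no321 p \<and> no1243 p"

lemma F_eq: "F n [[3,2,1],[1,2,4,3]] = {p. perm_of n p \<and> good p}"
  unfolding F_def good_def avoids_def using contains321 contains1243 by auto



lemma perm_length: "perm_of n p \<Longrightarrow> length p = n"
  unfolding perm_of_def by (metis card_atLeastAtMost diff_Suc_1 distinct_card)

lemma nth_snoc_lt: "i < length p \<Longrightarrow> (p @ [m]) ! i = p ! i" by (simp add: nth_append)
lemma nth_snoc_eq: "(p @ [m]) ! length p = m" by simp

lemma good_snoc:
  assumes g: "good p" and lt: "\<forall>x\<in>set p. x < m"
  shows "good (p @ [m])"
proof -
  have lt': "\<And>i. i < length p \<Longrightarrow> p ! i < m" using lt by auto
  have A: "no321 (p @ [m])"
  proof -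
    { fix i j k assume h: "i<j" "j<k" "k<length (p@[m])" "(p@[m])!j < (p@[m])!i" "(p@[m])!k < (p@[m])!j"
      have False
      proof (cases "k = length p")
        case True
        then show ?thesis using h lt'[of j] by (simp add: nth_append)
      next
        case False
        then have "k < length p" using h by simp
        then have "p!j < p!i" "p!k < p!j" using h by (simp_all add: nth_append)
        then show ?thesis using g h(1,2) \<open>k < length p\<close> unfolding good_def no321_def by blast
      qed }
    then show ?thesis unfolding no321_def by blast
  qed
  have B: "no1243 (p @ [m])"
  proof -
    { fix i j k l assume h: "i<j" "j<k" "k<l" "l<length (p@[m])" "(p@[m])!i < (p@[m])!j" "(p@[m])!j < (p@[m])!l" "(p@[m])!l < (p@[m])!k"
      have False
      proof (cases "l = length p")
        case True
        then show ?thesis using h lt'[of k] by (simp add: nth_append)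
      next
        case False
        then have "l < length p" using h by simp
        then have "p!i < p!j" "p!j < p!l" "p!l < p!k" using h by (simp_all add: nth_append)
        then show ?thesis using g h(1,2,3) \<open>l < length p\<close> unfolding good_def no1243_def by blast
      qed }
    then show ?thesis unfolding no1243_def by blast
  qed
  have C: "fishburn (p @ [m])"
  proof -
    { fix i j assume h: "i < j" "j < length (p@[m])" "i + 1 < length (p@[m])"
        "(p@[m]) ! j < (p@[m]) ! i" "(p@[m]) ! i < (p@[m]) ! (i + 1)" "(p@[m]) ! i = (p@[m]) ! j + 1"
      have False
      proof (cases "j = length p")
        case True
        then show ?thesis using h lt'[of i] by (simp add: nth_append)
      next
        case False
        then have "j < length p" using h by simp
        have "i + 1 < length p" using h \<open>j < length p\<close> by simp
        then have "p ! j < p ! i" "p ! i < p ! (i + 1)" "p ! i = p ! j + 1" using h \<open>j < length p\<close> by (simp_all add: nth_append)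
        then show ?thesis using g h(1) \<open>j < length p\<close> \<open>i + 1 < length p\<close> unfolding good_def fishburn_def by blast
      qed }
    then show ?thesis unfolding fishburn_def by blast
  qed
  show ?thesis using A B C good_def by blast
qed

lemma good_butlast:
  assumes g: "good p"
  shows "good (butlast p)"
proof -
  have nb: "\<And>i. i < length (butlast p) \<Longrightarrow> butlast p ! i = p ! i" by (simp add: nth_butlast)
  have L: "length (butlast p) \<le> length p" by simp
  have "no321 (butlast p)"
  proof -
    { fix i j k assume h: "i<j" "j<k" "k<length (butlast p)" "butlast p!j < butlast p!i" "butlast p!k < butlast p!j"
      then have "p!j < p!i" "p!k < p!j" "k < length p" using nb by auto
      then have False using g h(1,2) unfolding good_def no321_def by blast }
    then show ?thesis unfolding no321_def by blast
  qed
  moreover have "no1243 (butlast p)"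
  proof -
    { fix i j k l assume h: "i<j" "j<k" "k<l" "l<length (butlast p)" "butlast p!i < butlast p!j" "butlast p!j < butlast p!l" "butlast p!l < butlast p!k"
      then have "p!i < p!j" "p!j < p!l" "p!l < p!k" "l < length p" using nb by auto
      then have False using g h(1,2,3) unfolding good_def no1243_def by blast }
    then show ?thesis unfolding no1243_def by blast
  qed
  moreover have "fishburn (butlast p)"
  proof -
    { fix i j assume h: "i < j" "j < length (butlast p)" "i + 1 < length (butlast p)"
        "butlast p ! j < butlast p ! i" "butlast p ! i < butlast p ! (i + 1)" "butlast p ! i = butlast p ! j + 1"
      then have "p ! j < p ! i" "p ! i < p ! (i + 1)" "p ! i = p ! j + 1" "j < length p" "i+1 < length p" using nb by auto
      then have False using g h(1) unfolding good_def fishburn_def by blast }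
    then show ?thesis unfolding fishburn_def by blast
  qed
  ultimately show ?thesis unfolding good_def by blast
qed

definition FF :: "nat \<Rightarrow> nat list set" where
  "FF n = {p. perm_of n p \<and> good p}"

definition G :: "nat \<Rightarrow> nat list set" where
  "G n = {p. perm_of n p \<and> good p \<and> last p \<noteq> n}"

lemma FF_finite: "finite (FF n)"
proof -
  have "FF n \<subseteq> {xs. set xs \<subseteq> {1..n} \<and> length xs = n}"
    unfolding FF_def using perm_length perm_of_def by auto
  moreover have "finite {xs. set xs \<subseteq> {1..n} \<and> length xs = n}"
    by (rule finite_lists_length_eq) simp
  ultimately show ?thesis by (rule finite_subset)
qed

lemma FF_split:
  assumes "n \<ge> 1"
  shows "FF n = (\<lambda>q. q @ [n]) ` FF (n - 1) \<union> G n"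
proof
  show "FF n \<subseteq> (\<lambda>q. q @ [n]) ` FF (n - 1) \<union> G n"
  proof
    fix p assume p: "p \<in> FF n"
    show "p \<in> (\<lambda>q. q @ [n]) ` FF (n - 1) \<union> G n"
    proof (cases "last p = n")
      case False then show ?thesis using p unfolding FF_def G_def by auto
    next
      case True
      have pp: "perm_of n p" "good p" using p unfolding FF_def by auto
      have len: "length p = n" using perm_length pp(1) .
      then have ne: "p \<noteq> []" using assms by auto
      have eq: "p = butlast p @ [n]" using True ne by (metis append_butlast_last_id)
      have "distinct (butlast p @ [n])" using pp(1) eq unfolding perm_of_def by metis
      then have d: "distinct (butlast p)" "n \<notin> set (butlast p)" by auto
      have "set (butlast p) \<union> {n} = {1..n}" using pp(1) eq unfolding perm_of_def
        by (metis Un_insert_right set_append empty_set list.simps(15) sup_bot.right_neutral)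
      then have "set (butlast p) = {1..n} - {n}" using d(2) by blast
      also have "\<dots> = {1..n-1}" using assms by auto
      finally have "set (butlast p) = {1..n-1}" .
      then have "perm_of (n-1) (butlast p)" using d(1) unfolding perm_of_def by simp
      moreover have "good (butlast p)" using good_butlast pp(2) .
      ultimately show ?thesis using eq unfolding FF_def by blast
    qed
  qed
next
  show "(\<lambda>q. q @ [n]) ` FF (n - 1) \<union> G n \<subseteq> FF n"
  proof
    fix p assume "p \<in> (\<lambda>q. q @ [n]) ` FF (n - 1) \<union> G n"
    then show "p \<in> FF n"
    proof
      assume "p \<in> G n" then show ?thesis unfolding G_def FF_def by auto
    next
      assume "p \<in> (\<lambda>q. q @ [n]) ` FF (n - 1)"
      then obtain q where q: "p = q @ [n]" "perm_of (n-1) q" "good q" unfolding FF_def by auto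
      have s: "set q = {1..n-1}" "distinct q" using q(2) unfolding perm_of_def by auto
      have "\<forall>x\<in>set q. x < n" using s assms by auto
      then have "good p" using good_snoc q by simp
      moreover have "perm_of n p" unfolding perm_of_def q(1) using s assms by auto
      ultimately show ?thesis unfolding FF_def by simp
    qed
  qed
qed

lemma card_FF_step:
  assumes "n \<ge> 1"
  shows "card (FF n) = card (FF (n-1)) + card (G n)"
proof -
  have fin: "finite (FF (n-1))" "finite (G n)"
    using FF_finite[of "n-1"] FF_finite[of n] unfolding FF_def G_def
    by (auto elim: finite_subset[rotated])
  have disj: "(\<lambda>q. q @ [n]) ` FF (n - 1) \<inter> G n = {}" unfolding G_def by auto
  have inj: "inj_on (\<lambda>q. q @ [n]) (FF (n-1))" by (rule inj_onI) simp
  show ?thesis using FF_split[OF assms] card_Un_disjoint[OF finite_imageI[OF fin(1)] fin(2) disj]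
    card_image[OF inj] by simp
qed

lemma FF0: "FF 0 = {[]}"
  unfolding FF_def perm_of_def good_def no321_def no1243_def fishburn_def by auto

lemma G1: "G 1 = {}"
proof -
  { fix p assume "perm_of 1 p"
    then have "set p = {1}" "length p = 1" using perm_length unfolding perm_of_def by auto
    then have "last p = 1" by (metis last_in_set length_0_conv singletonD zero_neq_one) }
  then show ?thesis unfolding G_def by auto
qed



definition gL0 :: "nat \<Rightarrow> nat \<Rightarrow> nat" where "gL0 n i = (if i=0 then n else i)"
definition gL1 :: "nat \<Rightarrow> nat \<Rightarrow> nat" where "gL1 n i = (if i=0 then 1 else if i=1 then n else i)"
definition gX :: "nat \<Rightarrow> nat \<Rightarrow> nat \<Rightarrow> nat" where
  "gX n a i = (if i=0 then a else if i=1 then 1 else if i=2 then n else if i \<le> a then i-1 else i)"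
definition gY :: "nat \<Rightarrow> nat \<Rightarrow> nat \<Rightarrow> nat" where
  "gY n a i = (if i=0 then a else if i=1 then 1 else if i \<le> n+1-a then a+i-1 else i+a-n)"

lemma perm_map:
  assumes "inj_on g {0..<n}" "\<And>i. i < n \<Longrightarrow> 1 \<le> g i \<and> g i \<le> n"
  shows "perm_of n (map g [0..<n])"
proof -
  have "g ` {0..<n} \<subseteq> {1..n}" using assms(2) by auto
  moreover have "card (g ` {0..<n}) = card {1..n}" using card_image[OF assms(1)] by simp
  ultimately have "g ` {0..<n} = {1..n}" by (simp add: card_subset_eq)
  then show ?thesis unfolding perm_of_def using assms(1) by (simp add: distinct_map)
qed

lemma good_map:
  assumes "\<And>i j k. i<j \<Longrightarrow> j<k \<Longrightarrow> k<n \<Longrightarrow> \<not> (g j < g i \<and> g k < g j)"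
    "\<And>i j k l. i<j \<Longrightarrow> j<k \<Longrightarrow> k<l \<Longrightarrow> l<n \<Longrightarrow> \<not> (g i < g j \<and> g j < g l \<and> g l < g k)"
    "\<And>i j. i<j \<Longrightarrow> j<n \<Longrightarrow> i+1<n \<Longrightarrow> \<not> (g j < g i \<and> g i < g (i+1) \<and> g i = g j + 1)"
  shows "good (map g [0..<n])"
proof -
  have nth: "\<And>i. i < n \<Longrightarrow> map g [0..<n] ! i = g i" by simp
  have L: "length (map g [0..<n]) = n" by simp
  have "no321 (map g [0..<n])" unfolding no321_def L
  proof clarify
    fix i j k assume h: "i<j" "j<k" "k<n" "map g [0..<n] ! j < map g [0..<n] ! i" "map g [0..<n] ! k < map g [0..<n] ! j"
    then show False using assms(1)[OF h(1-3)] nth[of i] nth[of j] nth[of k] by simp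
  qed
  moreover have "no1243 (map g [0..<n])" unfolding no1243_def L
  proof clarify
    fix i j k l assume h: "i<j" "j<k" "k<l" "l<n" "map g [0..<n] ! i < map g [0..<n] ! j" "map g [0..<n] ! j < map g [0..<n] ! l" "map g [0..<n] ! l < map g [0..<n] ! k"
    then show False using assms(2)[OF h(1-4)] nth[of i] nth[of j] nth[of k] nth[of l] by simp
  qed
  moreover have "fishburn (map g [0..<n])" unfolding fishburn_def L
  proof clarify
    fix i j assume h: "i<j" "j<n" "i+1<n" "map g [0..<n] ! j < map g [0..<n] ! i" "map g [0..<n] ! i < map g [0..<n] ! (i+1)" "map g [0..<n] ! i = map g [0..<n] ! j + 1"
    then show False using assms(3)[OF h(1-3)] nth[of i] nth[of j] nth[of "i+1"] by simp
  qed
  ultimately show ?thesis unfolding good_def by simp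
qed


lemma last_map: "n \<ge> 1 \<Longrightarrow> last (map g [0..<n]) = g (n-1)"
  by (simp add: last_map last_upt)

lemma inG:
  assumes "inj_on g {0..<n}" "\<And>i. i < n \<Longrightarrow> 1 \<le> g i \<and> g i \<le> n"
    "\<And>i j k. i<j \<Longrightarrow> j<k \<Longrightarrow> k<n \<Longrightarrow> \<not> (g j < g i \<and> g k < g j)"
    "\<And>i j k l. i<j \<Longrightarrow> j<k \<Longrightarrow> k<l \<Longrightarrow> l<n \<Longrightarrow> \<not> (g i < g j \<and> g j < g l \<and> g l < g k)"
    "\<And>i j. i<j \<Longrightarrow> j<n \<Longrightarrow> i+1<n \<Longrightarrow> \<not> (g j < g i \<and> g i < g (i+1) \<and> g i = g j + 1)"
    "n \<ge> 1" "g (n-1) \<noteq> n"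
  shows "map g [0..<n] \<in> G n"
  unfolding G_def using perm_map[OF assms(1,2)] good_map[of n g, OF assms(3,4,5)] last_map[of n g, OF assms(6)] assms(7)
  by simp

lemma L0_in: "n \<ge> 2 \<Longrightarrow> map (gL0 n) [0..<n] \<in> G n"
  apply (rule inG) unfolding gL0_def inj_on_def by (auto split: if_splits)

lemma L1_in: "n \<ge> 3 \<Longrightarrow> map (gL1 n) [0..<n] \<in> G n"
  apply (rule inG) unfolding gL1_def inj_on_def by (auto split: if_splits)

lemma X_in: "2 \<le> a \<Longrightarrow> a < n \<Longrightarrow> 4 \<le> n \<Longrightarrow> map (gX n a) [0..<n] \<in> G n"
  apply (rule inG) unfolding gX_def inj_on_def by (auto split: if_splits)

lemma Y_in: "3 \<le> a \<Longrightarrow> a+2 \<le> n \<Longrightarrow> map (gY n a) [0..<n] \<in> G n"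
  apply (rule inG) unfolding gY_def inj_on_def by (auto split: if_splits)

definition E :: "nat \<Rightarrow> nat list set" where
  "E n = {map (gL0 n) [0..<n]} \<union> (if 3 \<le> n then {map (gL1 n) [0..<n]} else {})
     \<union> (if 4 \<le> n then (\<lambda>a. map (gX n a) [0..<n]) ` {2..<n} else {})
     \<union> (\<lambda>a. map (gY n a) [0..<n]) ` {3..n-2}"

lemma E_sub: "n \<ge> 2 \<Longrightarrow> E n \<subseteq> G n"
  unfolding E_def using L0_in L1_in X_in Y_in by auto



lemma mnth: "i < n \<Longrightarrow> map g [0..<n] ! i = g i" by simp

lemma card_E: "n \<ge> 2 \<Longrightarrow> card (E n) = (if n = 2 then 1 else 2*n-4)"
proof -
  assume n: "n \<ge> 2"
  define A where "A = {map (gL0 n) [0..<n]}"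
  define B where "B = (if 3 \<le> n then {map (gL1 n) [0..<n]} else {})"
  define C where "C = (if 4 \<le> n then (\<lambda>a. map (gX n a) [0..<n]) ` {2..<n} else {})"
  define D where "D = (\<lambda>a. map (gY n a) [0..<n]) ` {3..n-2}"
  have E: "E n = A \<union> B \<union> C \<union> D" unfolding E_def A_def B_def C_def D_def by simp
  have inX: "inj_on (\<lambda>a. map (gX n a) [0..<n]) {2..<n}"
  proof (rule inj_onI)
    fix a b assume "a \<in> {2..<n}" "b \<in> {2..<n}" and e: "map (gX n a) [0..<n] = map (gX n b) [0..<n]"
    from e have "map (gX n a) [0..<n] ! 0 = map (gX n b) [0..<n] ! 0" by (metis (no_types))
    then show "a = b" using n by (simp add: gX_def)
  qed
  have inY: "inj_on (\<lambda>a. map (gY n a) [0..<n]) {3..n-2}"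
  proof (rule inj_onI)
    fix a b assume "a \<in> {3..n-2}" "b \<in> {3..n-2}" and e: "map (gY n a) [0..<n] = map (gY n b) [0..<n]"
    from e have "map (gY n a) [0..<n] ! 0 = map (gY n b) [0..<n] ! 0" by (metis (no_types))
    then show "a = b" using n by (simp add: gY_def)
  qed
  have cA: "card A = 1" unfolding A_def by simp
  have cB: "card B = (if 3 \<le> n then 1 else 0)" unfolding B_def by simp
  have cC: "card C = (if 4 \<le> n then n - 2 else 0)" unfolding C_def using card_image[OF inX] by simp
  have cD: "card D = n - 4" unfolding D_def using card_image[OF inY] by simp
  have h0: "\<And>g. map g [0..<n] ! 0 = g 0" using n by simp
  have dAB: "A \<inter> B = {}" unfolding A_def B_def using h0[of "gL0 n"] h0[of "gL1 n"] n
    by (auto simp: gL0_def gL1_def)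
  have dABC: "(A \<union> B) \<inter> C = {}" unfolding A_def B_def C_def
    using h0[of "gL0 n"] h0[of "gL1 n"] n by (auto simp: gL0_def gL1_def gX_def dest!: bspec[where x=0])
  have dABCD: "(A \<union> B \<union> C) \<inter> D = {}"
  proof -
    { fix a assume a: "a \<in> {3..n-2}" and m: "map (gY n a) [0..<n] \<in> A \<union> B \<union> C"
      have "n \<ge> 5" using a by auto
      then have y0: "map (gY n a) [0..<n] ! 0 = a" and y2: "map (gY n a) [0..<n] ! 2 = a + 1"
        using a by (auto simp: gY_def)
      have False using m unfolding A_def B_def C_def
      proof (elim UnE)
        assume "map (gY n a) [0..<n] \<in> {map (gL0 n) [0..<n]}"
        then show False using y0 a h0[of "gL0 n"] by (auto simp: gL0_def)
      next
        assume "map (gY n a) [0..<n] \<in> (if 3 \<le> n then {map (gL1 n) [0..<n]} else {})"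
        then show False using y0 a h0[of "gL1 n"] by (auto simp: gL1_def split: if_splits)
      next
        assume "map (gY n a) [0..<n] \<in> (if 4 \<le> n then (\<lambda>a. map (gX n a) [0..<n]) ` {2..<n} else {})"
        then obtain b where "map (gY n a) [0..<n] = map (gX n b) [0..<n]" by (auto split: if_splits simp del: map_eq_conv)
        then have "map (gX n b) [0..<n] ! 2 = a + 1" using y2 by metis
        then show False using a \<open>n \<ge> 5\<close> by (simp add: gX_def)
      qed }
    then show ?thesis unfolding D_def by blast
  qed
  have fin: "finite A" "finite B" "finite C" "finite D" unfolding A_def B_def C_def D_def by auto
  have "card (E n) = card A + card B + card C + card D"
    unfolding E using fin dAB dABC dABCD
    by (simp add: card_Un_disjoint)
  then show ?thesis using cA cB cC cD n by auto
qed



lemma incr_lb: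
  assumes mono: "\<And>i j. s \<le> i \<Longrightarrow> i < j \<Longrightarrow> j < s+m \<Longrightarrow> f i < (f j::nat)"
    and lb: "\<And>i. s \<le> i \<Longrightarrow> i < s+m \<Longrightarrow> t \<le> f i"
  shows "k < m \<Longrightarrow> t + k \<le> f (s+k)"
proof (induction k)
  case 0 then show ?case using lb[of s] by simp
next
  case (Suc k)
  then have "t + k \<le> f (s+k)" by simp
  moreover have "f (s+k) < f (s + Suc k)" using mono[of "s+k" "s+Suc k"] Suc.prems by simp
  ultimately show ?case by simp
qed

lemma incr_ub:
  assumes mono: "\<And>i j. s \<le> i \<Longrightarrow> i < j \<Longrightarrow> j < s+m \<Longrightarrow> f i < (f j::nat)"
    and ub: "\<And>i. s \<le> i \<Longrightarrow> i < s+m \<Longrightarrow> f i < t + c"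
  shows "k < m \<Longrightarrow> f (s+k) + (m - k) \<le> t + c"
proof (induction "m - k" arbitrary: k)
  case 0 then show ?case by simp
next
  case (Suc d)
  show ?case
  proof (cases "k + 1 = m")
    case True
    then show ?thesis using ub[of "s+k"] by simp
  next
    case False
    then have "f (s+(k+1)) + (m - (k+1)) \<le> t + c" using Suc.hyps(1)[of "k+1"] Suc.hyps(2) Suc.prems by simp
    moreover have "f (s+k) < f (s + (k+1))" using mono[of "s+k" "s+(k+1)"] Suc.prems False by simp
    ultimately show ?thesis using Suc.prems by simp
  qed
qed

lemma incr_le:
  assumes mono: "\<And>i j. s \<le> i \<Longrightarrow> i < j \<Longrightarrow> j < s+m \<Longrightarrow> f i < (f j::nat)"
    and bnd: "\<And>i. s \<le> i \<Longrightarrow> i < s+m \<Longrightarrow> t \<le> f i \<and> f i < t + c"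
  shows "m \<le> c"
proof (cases m)
  case 0 then show ?thesis by simp
next
  case (Suc m')
  have "t + m' \<le> f (s+m')" using incr_lb[where s=s and m=m and f=f and t=t and k=m', OF mono] bnd Suc by auto
  moreover have "f (s+m') < t + c" using bnd[of "s+m'"] Suc by simp
  ultimately show ?thesis using Suc by simp
qed

lemma incr_eq:
  assumes mono: "\<And>i j. s \<le> i \<Longrightarrow> i < j \<Longrightarrow> j < s+m \<Longrightarrow> f i < (f j::nat)"
    and bnd: "\<And>i. s \<le> i \<Longrightarrow> i < s+m \<Longrightarrow> t \<le> f i \<and> f i < t + m"
    and k: "k < m"
  shows "f (s+k) = t + k"
proof -
  have "t + k \<le> f (s+k)" using incr_lb[where s=s and m=m and f=f and t=t and k=k, OF mono] bnd k by auto
  moreover have "f (s+k) + (m - k) \<le> t + m" using incr_ub[where s=s and m=m and f=f and t=t and c=m and k=k, OF mono] bnd k by auto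
  ultimately show ?thesis using k by simp
qed

locale ctx =
  fixes p :: "nat list" and n :: nat
  assumes perm: "perm_of n p" and gd: "good p" and lst: "last p \<noteq> n" and n2: "n \<ge> 2"
begin

lemma len: "length p = n" using perm perm_length by blast

lemma vals: "i < n \<Longrightarrow> 1 \<le> p!i \<and> p!i \<le> n"
  using perm len unfolding perm_of_def by (metis atLeastAtMost_iff nth_mem)

lemma inj: "i < n \<Longrightarrow> j < n \<Longrightarrow> p!i = p!j \<Longrightarrow> i = j"
  using perm len unfolding perm_of_def by (simp add: nth_eq_iff_index_eq)

lemma surj: "1 \<le> v \<Longrightarrow> v \<le> n \<Longrightarrow> \<exists>i<n. p!i = v"
  using perm len unfolding perm_of_def by (metis atLeastAtMost_iff in_set_conv_nth)

lemma N321: "i<j \<Longrightarrow> j<k \<Longrightarrow> k<n \<Longrightarrow> p!j < p!i \<Longrightarrow> p!k < p!j \<Longrightarrow> False"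
  using gd len unfolding good_def no321_def by blast

lemma N1243: "i<j \<Longrightarrow> j<k \<Longrightarrow> k<l \<Longrightarrow> l<n \<Longrightarrow> p!i < p!j \<Longrightarrow> p!j < p!l \<Longrightarrow> p!l < p!k \<Longrightarrow> False"
  using gd len unfolding good_def no1243_def by blast

lemma Fish: "i+1 < n \<Longrightarrow> p!i < p!(i+1) \<Longrightarrow> 2 \<le> p!i \<Longrightarrow> j < n \<Longrightarrow> p!j + 1 = p!i \<Longrightarrow> j < i"
proof (rule ccontr)
  assume h: "i+1 < n" "p!i < p!(i+1)" "2 \<le> p!i" "j < n" "p!j + 1 = p!i" "\<not> j < i"
  then have "j \<noteq> i" by auto
  then have "i < j" using h by simp
  then show False using gd len h unfolding good_def fishburn_def by fastforce
qed

definition q where "q = (SOME i. i < n \<and> p!i = n)"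

lemma q: "q < n" "p!q = n"
proof -
  have "\<exists>i. i < n \<and> p!i = n" using surj[of n] n2 by auto
  then show "q < n" "p!q = n" unfolding q_def by (metis (mono_tags, lifting) someI_ex)+
qed

lemma q2: "q + 2 \<le> n"
proof -
  have "last p = p!(n-1)" using len n2 by (subst last_conv_nth) auto
  then have "q \<noteq> n-1" using lst q by auto
  then show ?thesis using q by simp
qed

lemma after: "q < k \<Longrightarrow> k < l \<Longrightarrow> l < n \<Longrightarrow> p!k < p!l"
proof (rule ccontr)
  assume h: "q < k" "k < l" "l < n" "\<not> p!k < p!l"
  have "p!k \<noteq> p!l" using inj[of k l] h by auto
  then have "p!l < p!k" using h by simp
  moreover have "p!k < p!q" using q vals[of k] inj[of k q] h by fastforce
  ultimately show False using N321[of q k l] h by simp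
qed

lemma ne_n: "i < n \<Longrightarrow> i \<noteq> q \<Longrightarrow> p!i < n"
  using q vals[of i] inj[of i q] by fastforce

lemma case0: "q = 0 \<Longrightarrow> p = map (gL0 n) [0..<n]"
proof (rule nth_equalityI)
  assume q0: "q = 0"
  show "length p = length (map (gL0 n) [0..<n])" using len by simp
  fix i assume "i < length p"
  then have i: "i < n" using len by simp
  show "p ! i = map (gL0 n) [0..<n] ! i"
  proof (cases "i = 0")
    case True then show ?thesis using q q0 i by (simp add: gL0_def)
  next
    case False
    have "p!(1+(i-1)) = 1 + (i-1)"
      apply (rule incr_eq[of 1 "n-1" "\<lambda>i. p!i"])
      using after q0 vals ne_n i False by auto
    then show ?thesis using i False by (simp add: gL0_def)
  qed
qed


lemma case1: "q = 1 \<Longrightarrow> p = map (gL1 n) [0..<n]"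
proof (rule nth_equalityI)
  assume q1: "q = 1"
  have n3: "n \<ge> 3" using q2 q1 by simp
  have p0: "p!0 = 1"
  proof (rule ccontr)
    assume "p!0 \<noteq> 1"
    then have ge: "2 \<le> p!0" using vals[of 0] n2 by auto
    have lt: "p!0 < p!(0+1)" using q q1 ne_n[of 0] n2 by auto
    have "\<exists>j<n. p!j = p!0 - 1" using surj[of "p!0 - 1"] ge vals[of 0] n2 by simp
    then obtain j where j: "j < n" "p!j = p!0 - 1" by blast
    have "j < 0" using Fish[of 0 j] j ge lt n3 by simp
    then show False by simp
  qed
  show "length p = length (map (gL1 n) [0..<n])" using len by simp
  fix i assume "i < length p"
  then have i: "i < n" using len by simp
  show "p ! i = map (gL1 n) [0..<n] ! i"
  proof (cases "i \<le> 1")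
    case True
    have pn: "p!1 = n" using q q1 by simp
    from True have "i = 0 \<or> i = 1" by auto
    then show ?thesis using pn p0 i by (auto simp: gL1_def)
  next
    case False
    have "p!(2+(i-2)) = 2 + (i-2)"
    proof (rule incr_eq[of 2 "n-2" "\<lambda>i. p!i"])
      fix i j assume "2 \<le> i" "i < j" "j < 2 + (n-2)" then show "p!i < p!j" using after q1 by auto
    next
      fix k assume k: "2 \<le> k" "k < 2 + (n-2)"
      have kn: "k < n" using k n2 by simp
      have "p!k \<noteq> 1" using inj[of k 0] p0 k kn by auto
      then show "2 \<le> p!k \<and> p!k < 2 + (n-2)" using vals[OF kn] ne_n[OF kn] k q1 n2 by auto
    next
      show "i - 2 < n - 2" using i False by simp
    qed
    moreover have "2 + (i-2) = i" using False by simp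
    ultimately have "p!i = i" by metis
    then show ?thesis using i False by (simp add: gL1_def)
  qed
qed

lemma p0_1: assumes qq: "q \<ge> 2" and lt: "p!0 < p!1" shows False
proof -
  have n4: "n \<ge> 4" using q2 qq by simp
  have p0: "p!0 = 1"
  proof (rule ccontr)
    assume "p!0 \<noteq> 1"
    then have ge: "2 \<le> p!0" using vals[of 0] n2 by auto
    have "\<exists>j<n. p!j = p!0 - 1" using surj[of "p!0 - 1"] ge vals[of 0] n2 by simp
    then obtain j where j: "j < n" "p!j = p!0 - 1" by blast
    have "j < 0" using Fish[of 0 j] j ge lt n4 by simp
    then show False by simp
  qed
  define c where "c = p!1"
  have cn: "c < n" using ne_n[of 1] qq n4 c_def by simp
  have c2: "c \<ge> 2" using lt p0 c_def by simp
  have beta: "p!k < c" if k: "q < k" "k < n" for k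
  proof (rule ccontr)
    assume "\<not> p!k < c"
    moreover have "p!k \<noteq> c" using inj[of k 1] k qq c_def by auto
    ultimately have "c < p!k" by simp
    then show False using N1243[of 0 1 q k] k qq lt c_def ne_n[of k] q by auto
  qed
  have order: "p!i < p!j" if h: "1 < i" "i < j" "j < n" "p!i < c" "p!j < c" for i j
  proof (rule ccontr)
    assume "\<not> p!i < p!j"
    moreover have "p!i \<noteq> p!j" using inj[of i j] h by auto
    ultimately have "p!j < p!i" by simp
    then show False using N321[of 1 i j] h c_def by simp
  qed
  define w where "w = p!(n-1)"
  have wc: "w < c" using beta[of "n-1"] q2 n4 w_def by simp
  have w2: "w \<ge> 2" using vals[of "n-1"] inj[of "n-1" 0] p0 n4 w_def by fastforce
  have c3: "c \<ge> 3" using wc w2 by simp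
  have "\<exists>r<n. p!r = c - 1" using surj[of "c-1"] c3 cn by simp
  then obtain r where r: "r < n" "p!r = c - 1" by blast
  have r0: "r \<noteq> 0"
  proof
    assume "r = 0" then show False using r p0 c3 by simp
  qed
  have r1: "r \<noteq> 1" using r c_def c3 by auto
  have rn: "r = n-1"
  proof (rule ccontr)
    assume "r \<noteq> n-1"
    then have "r < n-1" using r by simp
    then have "p!r < p!(n-1)" using order[of r "n-1"] r0 r1 r c3 wc w_def by simp
    then show False using r wc w_def by simp
  qed
  have fishc: "p!2 \<le> c"
  proof (rule ccontr)
    assume "\<not> p!2 \<le> c"
    then have "c < p!(1+1)" by (simp add: numeral_2_eq_2)
    then have "r < 1" using Fish[of 1 r] r n4 c2 c_def by simp
    then show False using r0 by simp
  qed
  have q3: "q \<ge> 3"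
  proof (rule ccontr)
    assume "\<not> q \<ge> 3"
    then have "q = 2" using qq by simp
    then show False using fishc q cn by (simp add: numeral_2_eq_2)
  qed
  have p2c: "p!2 < c" using fishc inj[of 2 1] n4 c_def by fastforce
  have p2: "p!2 = 2"
  proof (rule ccontr)
    assume "p!2 \<noteq> 2"
    moreover have "p!2 \<noteq> 1" using inj[of 2 0] p0 n4 by auto
    ultimately have g2: "p!2 > 2" using vals[of 2] n4 by auto
    obtain s where s: "s < n" "p!s = 2" using surj[of 2] n4 by auto
    have "s \<noteq> 0" proof assume "s = 0" then show False using s p0 by simp qed
    moreover have "s \<noteq> 1" proof assume "s = 1" then show False using s c3 c_def by simp qed
    moreover have "s \<noteq> 2" proof assume "s = 2" then show False using s g2 by simp qed
    ultimately have "p!2 < p!s" using order[of 2 s] s p2c c3 by simp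
    then show False using s g2 by simp
  qed
  show False
  proof (cases "c - 1 = 2")
    case True
    then have "r = 2" using inj[of r 2] r p2 n4 by simp
    then show False using rn q3 q2 by simp
  next
    case False
    have a1: "q < n-1" "2 < c-1" "c-1 < n" "2 < q" using q2 False c3 cn q3 by auto
    have a2: "p!0 < p!2" "p!2 < p!(n-1)" "p!(n-1) < p!q" using p0 p2 rn r q a1 by auto
    show False using N1243[OF _ _ _ _ a2] a1 by simp
  qed
qed

lemma p1: assumes qq: "q \<ge> 2" and lt: "p!1 < p!0" shows "p!1 = 1"
proof (rule ccontr)
  assume ne: "p!1 \<noteq> 1"
  have n4: "n \<ge> 4" using q2 qq by simp
  obtain s where s: "s < n" "p!s = 1" using surj[of 1] n2 by auto
  have "s \<noteq> 0"
  proof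
    assume "s = 0" then have "p!0 = 1" using s by simp
    then show False using lt vals[of 1] n4 by simp
  qed
  moreover have "s \<noteq> 1" using s ne by auto
  ultimately show False using N321[of 0 1 s] s lt ne vals[of 1] n4 by simp
qed


lemma caseX:
  assumes q2': "q = 2" and lt: "p!1 < p!0"
  shows "p = map (gX n (p!0)) [0..<n] \<and> 2 \<le> p!0 \<and> p!0 < n \<and> 4 \<le> n"
proof -
  define a where "a = p!0"
  have n4: "4 \<le> n" using q2 q2' by simp
  have p1': "p!1 = 1" using p1 q2' lt by simp
  have a2: "2 \<le> a" using lt p1' a_def by simp
  have an: "a < n" using ne_n[of 0] q2' n4 a_def by simp
  have pq: "p!2 = n" using q q2' by simp
  define h where "h = (\<lambda>i. if p!i < a then p!i else p!i - 1)"
  have nv: "p!k \<noteq> a \<and> p!k \<noteq> 1 \<and> p!k \<noteq> n" if k: "3 \<le> k" "k < n" for k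
    using inj[of k 0] inj[of k 1] inj[of k 2] k a_def p1' pq n4 by auto
  have hk: "h (3 + (i-3)) = 2 + (i-3)" if i: "3 \<le> i" "i < n" for i
  proof (rule incr_eq[of 3 "n-3" h])
    fix k l assume kl: "3 \<le> k" "k < l" "l < 3 + (n-3)"
    then have "p!k < p!l" using after[of k l] q2' n4 by simp
    moreover have "p!k \<noteq> a" "p!l \<noteq> a" using nv[of k] nv[of l] kl n4 by auto
    ultimately show "h k < h l" unfolding h_def by auto
  next
    fix k assume k: "3 \<le> k" "k < 3 + (n-3)"
    then have "k < n" using n4 by simp
    then show "2 \<le> h k \<and> h k < 2 + (n-3)" using nv[of k] vals[of k] k n4 an a2 unfolding h_def by auto
  next
    show "i - 3 < n - 3" using i by simp
  qed
  have eq: "p = map (gX n a) [0..<n]"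
  proof (rule nth_equalityI)
    show "length p = length (map (gX n a) [0..<n])" using len by simp
    fix i assume "i < length p"
    then have i: "i < n" using len by simp
    show "p ! i = map (gX n a) [0..<n] ! i"
    proof (cases "i \<le> 2")
      case True
      then have "i = 0 \<or> i = 1 \<or> i = 2" by auto
      then show ?thesis using a_def p1' pq i by (auto simp: gX_def)
    next
      case False
      have "h (3 + (i-3)) = 2 + (i-3)" using hk[of i] i False by simp
      moreover have "3 + (i-3) = i" using False by simp
      ultimately have "h i = i - 1" using False by simp
      then show ?thesis using i False nv[of i] unfolding h_def by (auto simp: gX_def split: if_splits)
    qed
  qed
  show ?thesis using eq a2 an n4 a_def by simp
qed


lemma caseY:
  assumes q3: "q \<ge> 3" and lt: "p!1 < p!0"
  shows "p = map (gY n (p!0)) [0..<n] \<and> 3 \<le> p!0 \<and> p!0 + 2 \<le> n"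
proof -
  define a where "a = p!0"
  have n5: "5 \<le> n" using q2 q3 by simp
  have p1': "p!1 = 1" using p1 q3 lt by simp
  have a2: "2 \<le> a" using lt p1' a_def by simp
  have an: "a < n" using ne_n[of 0] q3 n5 a_def by simp
  have smallorder: "p!i < p!j" if h: "0 < i" "i < j" "j < n" "p!i < a" "p!j < a" for i j
  proof (rule ccontr)
    assume "\<not> p!i < p!j"
    moreover have "p!i \<noteq> p!j" using inj[of i j] h by auto
    ultimately have "p!j < p!i" by simp
    then show False using N321[of 0 i j] h a_def by simp
  qed
  have "\<exists>x. x \<in> {2..<q} \<and> (\<forall>y. y \<in> {2..<q} \<longrightarrow> p!x \<le> p!y)"
    using ex_has_least_nat[of "\<lambda>i. i \<in> {2..<q}" 2 "\<lambda>i. p!i"] q3 by simp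
  then obtain r where r: "2 \<le> r" "r < q" and rmin: "\<And>y. 2 \<le> y \<Longrightarrow> y < q \<Longrightarrow> p!r \<le> p!y" by auto
  define m where "m = p!r"
  have rn: "r < n" using r q by simp
  have m1: "m \<noteq> 1" using inj[of r 1] r rn p1' m_def by auto
  have ma': "m \<noteq> a" using inj[of r 0] r rn a_def m_def by auto
  have mn: "m < n" using ne_n[of r] r rn m_def by simp
  have m0: "1 \<le> m" using vals[OF rn] m_def by simp
  have qn1: "q < n - 1" using q2 by simp
  have ma: "a < m"
  proof (rule ccontr)
    assume "\<not> a < m"
    then have mlt: "m < a" using ma' by simp
    define w where "w = p!(n-1)"
    have "w \<noteq> m" using inj[of "n-1" r] rn r qn1 w_def m_def by auto
    moreover have "\<not> w < m"
    proof
      assume "w < m"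
      then have "p!r < p!(n-1)" using smallorder[of r "n-1"] r qn1 mlt w_def m_def by simp
      then show False using \<open>w < m\<close> w_def m_def by simp
    qed
    ultimately have mw: "m < w" by simp
    have b: "p!1 < p!r" "p!r < p!(n-1)" "p!(n-1) < p!q" using p1' m0 m1 mw w_def m_def ne_n[of "n-1"] qn1 q by auto
    show False using N1243[OF _ _ _ _ b] r qn1 by simp
  qed
  have beta: "p!k < m" if k: "q < k" "k < n" for k
  proof (rule ccontr)
    assume "\<not> p!k < m"
    moreover have "p!k \<noteq> m" using inj[of k r] k r m_def by auto
    ultimately have mk: "m < p!k" by simp
    have b: "p!1 < p!r" "p!r < p!k" "p!k < p!q" using p1' m0 m1 mk m_def ne_n[of k] k q by auto
    show False using N1243[OF _ _ _ _ b] r k by simp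
  qed
  have meq: "m = a + 1"
  proof (rule ccontr)
    assume "m \<noteq> a + 1"
    then have mg: "a + 1 < m" using ma by simp
    have "\<exists>s<n. p!s = m - 1" using surj[of "m-1"] mg mn by simp
    then obtain s where s: "s < n" "p!s = m - 1" by blast
    have "s \<noteq> 0" proof assume "s = 0" then show False using s mg a_def by simp qed
    moreover have "s \<noteq> 1" proof assume "s = 1" then show False using s mg a2 p1' by simp qed
    moreover have "\<not> (2 \<le> s \<and> s < q)" proof assume "2 \<le> s \<and> s < q" then show False using rmin[of s] s mg m_def by simp qed
    moreover have "s \<noteq> q" proof assume "s = q" then show False using s q mn by simp qed
    ultimately have sq: "q < s" by auto
    have asc: "p!r < p!(r+1)"
    proof (cases "r + 1 = q")
      case True then show ?thesis using q mn m_def by simp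
    next
      case False
      then have "p!r \<le> p!(r+1)" using rmin[of "r+1"] r by simp
      moreover have "p!r \<noteq> p!(r+1)" using inj[of r "r+1"] r q by auto
      ultimately show ?thesis by simp
    qed
    have "s < r" using Fish[of r s] asc s mg m_def r q by simp
    then show False using sq r by simp
  qed
  have betav: "2 \<le> p!k \<and> p!k < a" if k: "q < k" "k < n" for k
  proof -
    have "p!k \<noteq> a" using inj[of k 0] k a_def by auto
    moreover have "p!k \<noteq> 1" using inj[of k 1] k p1' q3 by auto
    ultimately show ?thesis using beta[OF k] meq vals[of k] k by auto
  qed
  have midv: "a + 1 \<le> p!i \<and> p!i \<le> n" if i: "2 \<le> i" "i \<le> q" for i
  proof (cases "i = q")
    case True then show ?thesis using q an by simp
  next
    case False
    then show ?thesis using rmin[of i] i meq m_def vals[of i] q by simp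
  qed
  have midinc: "p!i < p!j" if ij: "2 \<le> i" "i < j" "j \<le> q" for i j
  proof (cases "j = q")
    case True then show ?thesis using ne_n[of i] ij q by simp
  next
    case False
    show ?thesis
    proof (rule ccontr)
      assume "\<not> p!i < p!j"
      moreover have "p!i \<noteq> p!j" using inj[of i j] ij q by auto
      ultimately have c1: "p!j < p!i" by simp
      have "p!(n-1) < p!j" using betav[of "n-1"] midv[of j] qn1 ij by simp
      then show False using N321[of i j "n-1"] c1 ij False qn1 by simp
    qed
  qed
  have le1: "q - 1 \<le> n - a"
  proof (rule incr_le[of 2 "q-1" "\<lambda>i. p!i" "a+1"])
    fix i j assume "2 \<le> i" "i < j" "j < 2 + (q-1)" then show "p!i < p!j" using midinc q3 by simp
  next
    fix i assume "2 \<le> i" "i < 2 + (q-1)" then show "a+1 \<le> p!i \<and> p!i < a + 1 + (n-a)" using midv[of i] an q3 by simp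
  qed
  have le2: "n - 1 - q \<le> a - 2"
  proof (rule incr_le[of "q+1" "n-1-q" "\<lambda>i. p!i" 2])
    fix i j assume "q+1 \<le> i" "i < j" "j < q+1 + (n-1-q)" then show "p!i < p!j" using after q2 by simp
  next
    fix i assume h: "q+1 \<le> i" "i < q+1 + (n-1-q)"
    then have "q < i" "i < n" using q2 by auto
    then have "2 \<le> p!i \<and> p!i < a" using betav by simp
    then show "2 \<le> p!i \<and> p!i < 2 + (a-2)" using a2 by linarith
  qed
  have e1: "q - 1 = n - a" and e2: "n - 1 - q = a - 2" using le1 le2 q2 an a2 q3 by auto
  have a3: "3 \<le> a" using e2 qn1 by simp
  have an2: "a + 2 \<le> n" using e1 q3 an by simp
  have eq: "p = map (gY n a) [0..<n]"
  proof (rule nth_equalityI)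
    show "length p = length (map (gY n a) [0..<n])" using len by simp
    fix i assume "i < length p"
    then have i: "i < n" using len by simp
    show "p ! i = map (gY n a) [0..<n] ! i"
    proof (cases "i \<le> 1")
      case True
      then have "i = 0 \<or> i = 1" by auto
      then show ?thesis using a_def p1' i by (auto simp: gY_def)
    next
      case False
      show ?thesis
      proof (cases "i \<le> q")
        case True
        have "p!(2 + (i-2)) = a + 1 + (i-2)"
        proof (rule incr_eq[of 2 "q-1" "\<lambda>i. p!i"])
          fix k l assume "2 \<le> k" "k < l" "l < 2 + (q-1)" then show "p!k < p!l" using midinc q3 by simp
        next
          fix k assume "2 \<le> k" "k < 2 + (q-1)" then show "a+1 \<le> p!k \<and> p!k < a + 1 + (q-1)" using midv[of k] e1 an q3 by simp
        next
          show "i - 2 < q - 1" using True False by simp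
        qed
        moreover have "2 + (i-2) = i" using False by simp
        ultimately have "p!i = a + 1 + (i-2)" by metis
        then show ?thesis using i False True e1 an q3 by (simp add: gY_def) arith
      next
        case False2: False
        have "p!(q+1 + (i-q-1)) = 2 + (i-q-1)"
        proof (rule incr_eq[of "q+1" "n-1-q" "\<lambda>i. p!i"])
          fix k l assume "q+1 \<le> k" "k < l" "l < q+1 + (n-1-q)" then show "p!k < p!l" using after q2 by simp
        next
          fix k assume h: "q+1 \<le> k" "k < q+1 + (n-1-q)"
          then have "q < k" "k < n" using q2 by auto
          then have "2 \<le> p!k \<and> p!k < a" using betav by simp
          then show "2 \<le> p!k \<and> p!k < 2 + (n-1-q)" using a2 e2 by linarith
        next
          show "i-q-1 < n-1-q" using i False2 by simp
        qed
        moreover have "q+1 + (i-q-1) = i" using False2 by simp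
        ultimately have "p!i = 2 + (i-q-1)" by metis
        then show ?thesis using i False False2 e1 e2 an a3 q3 by (simp add: gY_def) arith
      qed
    qed
  qed
  show ?thesis using eq a3 an2 a_def by simp
qed


lemma inE: "p \<in> E n"
proof -
  have qn: "q < n" "q + 2 \<le> n" using q q2 by auto
  consider "q = 0" | "q = 1" | "q \<ge> 2 \<and> p!0 < p!1" | "q \<ge> 2 \<and> p!1 < p!0"
  proof -
    have "p!0 \<noteq> p!1" using inj[of 0 1] n2 by auto
    then show ?thesis using that by linarith
  qed
  then show ?thesis
  proof cases
    case 1 then show ?thesis using case0 unfolding E_def by simp
  next
    case 2 then show ?thesis using case1 qn unfolding E_def by simp
  next
    case 3 then show ?thesis using p0_1 by blast
  next
    case 4
    show ?thesis
    proof (cases "q = 2")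
      case True
      then have h: "p = map (gX n (p!0)) [0..<n] \<and> 2 \<le> p!0 \<and> p!0 < n \<and> 4 \<le> n" using caseX 4 by blast
      then have "p \<in> (\<lambda>a. map (gX n a) [0..<n]) ` {2..<n}" by auto
      then show ?thesis using h unfolding E_def by simp
    next
      case False
      then have h: "p = map (gY n (p!0)) [0..<n] \<and> 3 \<le> p!0 \<and> p!0 + 2 \<le> n" using caseY 4 by simp
      then have "p \<in> (\<lambda>a. map (gY n a) [0..<n]) ` {3..n-2}" by auto
      then show ?thesis unfolding E_def by simp
    qed
  qed
qed

end

lemma G_eq: "n \<ge> 2 \<Longrightarrow> G n = E n"
proof
  assume n: "n \<ge> 2"
  show "G n \<subseteq> E n"
  proof
    fix p assume "p \<in> G n"
    then have "ctx p n" using n unfolding G_def ctx_def by auto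
    then show "p \<in> E n" using ctx.inE by blast
  qed
  show "E n \<subseteq> G n" using E_sub n .
qed

lemma card_G: "n \<ge> 2 \<Longrightarrow> card (G n) = (if n = 2 then 1 else 2*n-4)"
  using G_eq card_E by simp

lemma card_FF: "n \<ge> 2 \<Longrightarrow> card (FF n) + 3*n = n^2 + 4"
proof (induction n rule: nat_induct_at_least)
  case base
  have "card (FF 1) = 1" using card_FF_step[of 1] FF0 G1 by simp
  then show ?case using card_FF_step[of 2] card_G[of 2] by (simp add: power2_eq_square)
next
  case (Suc n)
  have "card (FF (Suc n)) = card (FF n) + (2 * Suc n - 4)" using card_FF_step[of "Suc n"] card_G[of "Suc n"] Suc by simp
  then show ?case using Suc by (simp add: power2_eq_square algebra_simps)
qed

theorem mainTheorem6:
  fixes n :: nat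
  assumes "n \<ge> 2"
  shows "card (F n [[3,2,1], [1,2,4,3]]) = n^2 + 4 - 3*n"
proof -
  have "F n [[3,2,1], [1,2,4,3]] = FF n" unfolding F_eq FF_def by simp
  then show ?thesis using card_FF[OF assms] by simp
qed

end
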